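(* In the standing setup, let $S\in\mathfrak{S}$ be positively enabled and $T\in\mathfrak{S}$ negatively enabled, and let $A_S=\mathrm{eff}(\sigma^+_S)$, $B_T=-\mathrm{eff}(\sigma^-_T)$. Then $$\sum_{i\in\mathcal{N}_{(S,\cdot)}}\mathrm{len}(\rho^i_{\mathrm{cap}})\le A_S\cdot n,\qquad \sum_{i\in\mathcal{N}_{(\cdot,T)}}\mathrm{len}(\rho^i_{\mathrm{cap}})\le n\cdot B_T,$$ and moreover $\sum_{i\in\mathcal{N}}\mathrm{len}(\rho^i_{\mathrm{cap}})\le n^2$.
   Context: $\mathbb{N}=\{0,1,2,\dots\}$. A one-counter system (OCS) $\mathcal{O}$ consists of a finite set $Q$ of states, a set $T_{>0}\subseteq Q\times\{-1,0,1\}\times Q$ of non-zero transitions and a set $T_{=0}\subseteq Q\times\{0,1\}\times Q$ of zero tests. A configuration is a pair $(q,c)\in Q\times\mathbb{N}$ (state $q$, counter value $c$). A transition $t=(p,d,q)$ has source $p$, target $q$, effect $d$; it can be fired in $(p,c)$ if either $t\in T_{>0}$ and $c>0$, or $t\in T_{=0}$ and $c=0$, yielding $(q,c+d)$. A path is a sequence $(\gamma_1,t_1)\cdots(\gamma_m,t_m)$ such that, with some $\gamma_{m+1}$, firing $t_i$ in $\gamma_i$ yields $\gamma_{i+1}$ for all $i\le m$; its source is $\gamma_1$, target $\gamma_{m+1}$, length $\mathrm{len}=m$, configurations appearing on it are $\gamma_1,\dots,\gamma_{m+1}$, intermediate ones are $\gamma_2,\dots,\gamma_m$; its projection is $\mathrm{proj}=t_1\cdots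 t_m$ and its effect $\mathrm{eff}$ is the sum of the effects of its transitions. A sequence of transitions is consistent if each transition's target is the next one's source. A cycle is a consistent sequence of non-zero transitions starting and ending in the same state (its base state); positive/negative if its effect is positive/negative; simple if no state is visited twice except the base at start and end. The transition multigraph $G$ has vertices $Q$ and an edge $p\to q$ labelled $d$ for each $(p,d,q)\in T_{>0}$; $\mathfrak{S}$ is the set of its SCCs and $n_S$ the number of states in $S\in\mathfrak{S}$. A cycle is contained in $S$ if all its states lie in $S$; $S$ is positively (negatively) enabled if it contains a positive (negative) cycle. For every positively enabled $S$ a simple positive cycle $\sigma^+_S$ contained in $S$ is fixed, and for every negatively enabled $T$ a simple negative cycle $\sigma^-_T$ contained in $T$. An arc is a path whose source and target have counter value $0$ and whose intermediate configurations have positive counter value. A path is low if all configurations appearing on it have counter value $<5n$, where $n=|Q|$. For $S,T\in\mathfrak{S}$, an arc $\rho$ is $(S,T)$-normal if $\rho=\rho_{\mathrm{pref}}\rho_{\mathrm{up}}\rho_{\mathrm{cap}}\rho_{\mathrm{down}}\rho_{\mathrm{suff}}$ (normal decomposition) with $\rho_{\mathrm{pref}},\rho_{\mathrm{suff}}$ low, $\mathrm{proj}(\rho_{\mathrm{up}})=(\sigma^+_S)^a$, $\mathrm{proj}(\rho_{\mathrm{down}})=(\sigma^-_T)^b$ for some $a,b\in\mathbb{N}$, the source of $\rho_{\mathrm{cap}}$ having the base state of $\sigma^+_S$ and its target the base state of $\sigma^-_T$. Writing $A=\mathrm{eff}(\sigma^+_S)$, $B=-\mathrm{eff}(\sigma^-_T)$,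 such a decomposition is good if: (iii) $aA\le 2\,\mathrm{len}(\rho_{\mathrm{cap}})+2\,\mathrm{lcm}(A,B)$; (iv) $bB\le 2\,\mathrm{len}(\rho_{\mathrm{cap}})+2\,\mathrm{lcm}(A,B)$; (v) no infix of $\mathrm{proj}(\rho_{\mathrm{cap}})$ is a cycle with effect divisible by $\gcd(A,B)$; (vi) the target of $\rho_{\mathrm{up}}$ and the source of $\rho_{\mathrm{down}}$ have counter values $>n$; (vii) all configurations appearing on $\rho_{\mathrm{pref}}$ and $\rho_{\mathrm{suff}}$ together are pairwise distinct. Standing setup: $\alpha,\beta$ are configurations with counter value $0$; $\rho=\rho^1\rho^2\cdots\rho^k$ is a path from $\alpha$ to $\beta$ that has the minimum possible number of appearing configurations with counter value $0$ among all paths from $\alpha$ to $\beta$; each $\rho^i$ is an arc; $\{1,\dots,k\}=\mathcal{L}\sqcup\mathcal{N}$ where for $i\in\mathcal{L}$, $\rho^i$ is a low arc of minimum length among all low arcs with the same source and target, and for $i\in\mathcal{N}$, $\rho^i$ is $(S_i,T_i)$-normal for some $S_i,T_i\in\mathfrak{S}$ with a fixed good normal decomposition $\rho^i=\rho^i_{\mathrm{pref}}\rho^i_{\mathrm{up}}\rho^i_{\mathrm{cap}}\rho^i_{\mathrm{down}}\rho^i_{\mathrm{suff}}$. For $S,T\in\mathfrak{S}$: $\mathcal{N}_{(S,T)}=\{i\in\mathcal{N}: (S_i,T_i)=(S,T)\}$, $\mathcal{N}_{(S,\cdot)}=\{i\in\mathcal{N}:S_i=S\}$, $\mathcal{N}_{(\cdot,T)}=\{i\in\mathcal{N}:T_i=T\}$.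 *)

theory Defs
  imports Main
begin

type_synonym 'q trans = "'q \<times> int \<times> 'q"
type_synonym 'q conf = "'q \<times> nat"
text \<open>A path is given by its source configuration and its projection (list of
transitions); the configurations appearing on it are determined by these.\<close>
type_synonym 'q path = "'q conf \<times> 'q trans list"

definition tsrc :: "'q trans \<Rightarrow> 'q" where "tsrc t = fst t"
definition teff :: "'q trans \<Rightarrow> int" where "teff t = fst (snd t)"
definition ttgt :: "'q trans \<Rightarrow> 'q" where "ttgt t = snd (snd t)"

definition ocs :: "'q set \<Rightarrow> 'q trans set \<Rightarrow> 'q trans set \<Rightarrow> bool" where
  "ocs Q Tp Tz \<longleftrightarrow> finite Q \<and> Tp \<subseteq> Q \<times> {-1, 0, 1} \<times> Q \<and> Tz \<subseteq> Q \<times> {0, 1} \<times> Q"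

definition fireable :: "'q trans set \<Rightarrow> 'q trans set \<Rightarrow> 'q conf \<Rightarrow> 'q trans \<Rightarrow> bool" where
  "fireable Tp Tz \<gamma> t \<longleftrightarrow> tsrc t = fst \<gamma> \<and>
     ((t \<in> Tp \<and> snd \<gamma> > 0) \<or> (t \<in> Tz \<and> snd \<gamma> = 0))"

definition fire :: "'q conf \<Rightarrow> 'q trans \<Rightarrow> 'q conf" where
  "fire \<gamma> t = (ttgt t, nat (int (snd \<gamma>) + teff t))"

fun confs_from :: "'q conf \<Rightarrow> 'q trans list \<Rightarrow> 'q conf list" where
  "confs_from \<gamma> [] = [\<gamma>]"
| "confs_from \<gamma> (t # ts) = \<gamma> # confs_from (fire \<gamma> t) ts"

fun is_run :: "'q trans set \<Rightarrow> 'q trans set \<Rightarrow> 'q conf \<Rightarrow> 'q trans list \<Rightarrow> bool" where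
  "is_run Tp Tz \<gamma> [] = True"
| "is_run Tp Tz \<gamma> (t # ts) = (fireable Tp Tz \<gamma> t \<and> is_run Tp Tz (fire \<gamma> t) ts)"

definition is_path :: "'q trans set \<Rightarrow> 'q trans set \<Rightarrow> 'q path \<Rightarrow> bool" where
  "is_path Tp Tz \<rho> \<longleftrightarrow> is_run Tp Tz (fst \<rho>) (snd \<rho>)"

definition confs :: "'q path \<Rightarrow> 'q conf list" where
  "confs \<rho> = confs_from (fst \<rho>) (snd \<rho>)"

definition psrc :: "'q path \<Rightarrow> 'q conf" where "psrc \<rho> = fst \<rho>"
definition ptgt :: "'q path \<Rightarrow> 'q conf" where "ptgt \<rho> = last (confs \<rho>)"
definition plen :: "'q path \<Rightarrow> nat" where "plen \<rho> = length (snd \<rho>)"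
definition proj :: "'q path \<Rightarrow> 'q trans list" where "proj \<rho> = snd \<rho>"

definition inter_confs :: "'q path \<Rightarrow> 'q conf list" where
  "inter_confs \<rho> = butlast (tl (confs \<rho>))"

definition zeros :: "'q path \<Rightarrow> nat" where
  "zeros \<rho> = length (filter (\<lambda>\<gamma>. snd \<gamma> = 0) (confs \<rho>))"

definition decomp :: "'q path \<Rightarrow> 'q path list \<Rightarrow> bool" where
  "decomp \<rho> rs \<longleftrightarrow>
     (rs \<noteq> [] \<longrightarrow> psrc (hd rs) = psrc \<rho>) \<and>
     (\<forall>i. Suc i < length rs \<longrightarrow> ptgt (rs ! i) = psrc (rs ! Suc i)) \<and>
     proj \<rho> = concat (map proj rs)"

definition consistent :: "'q trans list \<Rightarrow> bool" where
  "consistent ts \<longleftrightarrow> (\<forall>i. Suc i < length ts \<longrightarrow> ttgt (ts ! i) = tsrc (ts ! Suc i))"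

definition is_cycle :: "'q trans set \<Rightarrow> 'q trans list \<Rightarrow> bool" where
  "is_cycle Tp ts \<longleftrightarrow> ts \<noteq> [] \<and> set ts \<subseteq> Tp \<and> consistent ts \<and> ttgt (last ts) = tsrc (hd ts)"

definition teff_list :: "'q trans list \<Rightarrow> int" where
  "teff_list ts = sum_list (map teff ts)"

definition base :: "'q trans list \<Rightarrow> 'q" where "base ts = tsrc (hd ts)"

definition simple_cycle :: "'q trans set \<Rightarrow> 'q trans list \<Rightarrow> bool" where
  "simple_cycle Tp ts \<longleftrightarrow> is_cycle Tp ts \<and> distinct (map tsrc ts)"

definition contained :: "'q trans list \<Rightarrow> 'q set \<Rightarrow> bool" where
  "contained ts S \<longleftrightarrow> set (map tsrc ts) \<union> set (map ttgt ts) \<subseteq> S"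

definition edges :: "'q trans set \<Rightarrow> ('q \<times> 'q) set" where
  "edges Tp = {(p, q). \<exists>d. (p, d, q) \<in> Tp}"

definition is_scc :: "'q set \<Rightarrow> 'q trans set \<Rightarrow> 'q set \<Rightarrow> bool" where
  "is_scc Q Tp S \<longleftrightarrow> (\<exists>p\<in>Q. S = {q \<in> Q. (p, q) \<in> (edges Tp)\<^sup>* \<and> (q, p) \<in> (edges Tp)\<^sup>*})"

definition pos_enabled :: "'q trans set \<Rightarrow> 'q set \<Rightarrow> bool" where
  "pos_enabled Tp S \<longleftrightarrow> (\<exists>ts. is_cycle Tp ts \<and> teff_list ts > 0 \<and> contained ts S)"

definition neg_enabled :: "'q trans set \<Rightarrow> 'q set \<Rightarrow> bool" where
  "neg_enabled Tp S \<longleftrightarrow> (\<exists>ts. is_cycle Tp ts \<and> teff_list ts < 0 \<and> contained ts S)"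

text \<open>the fixed cycles \<sigma>^+_S (sp S) and \<sigma>^-_T (sn T)\<close>
definition sigma_ok :: "'q set \<Rightarrow> 'q trans set \<Rightarrow> ('q set \<Rightarrow> 'q trans list) \<Rightarrow> ('q set \<Rightarrow> 'q trans list) \<Rightarrow> bool" where
  "sigma_ok Q Tp sp sn \<longleftrightarrow>
     (\<forall>S. is_scc Q Tp S \<and> pos_enabled Tp S \<longrightarrow>
          simple_cycle Tp (sp S) \<and> teff_list (sp S) > 0 \<and> contained (sp S) S) \<and>
     (\<forall>T. is_scc Q Tp T \<and> neg_enabled Tp T \<longrightarrow>
          simple_cycle Tp (sn T) \<and> teff_list (sn T) < 0 \<and> contained (sn T) T)"

definition is_arc :: "'q trans set \<Rightarrow> 'q trans set \<Rightarrow> 'q path \<Rightarrow> bool" where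
  "is_arc Tp Tz \<rho> \<longleftrightarrow> is_path Tp Tz \<rho> \<and> plen \<rho> \<ge> 1 \<and>
     snd (psrc \<rho>) = 0 \<and> snd (ptgt \<rho>) = 0 \<and> (\<forall>\<gamma>\<in>set (inter_confs \<rho>). snd \<gamma> > 0)"

definition is_low :: "nat \<Rightarrow> 'q path \<Rightarrow> bool" where
  "is_low n \<rho> \<longleftrightarrow> (\<forall>\<gamma>\<in>set (confs \<rho>). snd \<gamma> < 5 * n)"

type_synonym 'q ndec = "'q path \<times> 'q path \<times> 'q path \<times> 'q path \<times> 'q path"

definition cap_of :: "'q ndec \<Rightarrow> 'q path" where "cap_of d = fst (snd (snd d))"

definition normal_dec ::
  "'q set \<Rightarrow> 'q trans set \<Rightarrow> 'q trans set \<Rightarrow> ('q set \<Rightarrow> 'q trans list) \<Rightarrow> ('q set \<Rightarrow> 'q trans list)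
   \<Rightarrow> 'q path \<Rightarrow> 'q set \<Rightarrow> 'q set \<Rightarrow> 'q ndec \<Rightarrow> bool" where
  "normal_dec Q Tp Tz sp sn \<rho> S T d \<longleftrightarrow>
     (case d of (pf, up, cap, dn, sf) \<Rightarrow>
        is_scc Q Tp S \<and> is_scc Q Tp T \<and> pos_enabled Tp S \<and> neg_enabled Tp T \<and>
        is_arc Tp Tz \<rho> \<and> decomp \<rho> [pf, up, cap, dn, sf] \<and>
        is_path Tp Tz pf \<and> is_path Tp Tz up \<and> is_path Tp Tz cap \<and> is_path Tp Tz dn \<and> is_path Tp Tz sf \<and>
        is_low (card Q) pf \<and> is_low (card Q) sf \<and>
        (\<exists>a. proj up = concat (replicate a (sp S))) \<and>
        (\<exists>b. proj dn = concat (replicate b (sn T))) \<and>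
        fst (psrc cap) = base (sp S) \<and> fst (ptgt cap) = base (sn T))"

definition good_dec ::
  "'q set \<Rightarrow> 'q trans set \<Rightarrow> 'q trans set \<Rightarrow> ('q set \<Rightarrow> 'q trans list) \<Rightarrow> ('q set \<Rightarrow> 'q trans list)
   \<Rightarrow> 'q path \<Rightarrow> 'q set \<Rightarrow> 'q set \<Rightarrow> 'q ndec \<Rightarrow> bool" where
  "good_dec Q Tp Tz sp sn \<rho> S T d \<longleftrightarrow>
     normal_dec Q Tp Tz sp sn \<rho> S T d \<and>
     (case d of (pf, up, cap, dn, sf) \<Rightarrow>
       (let A = teff_list (sp S); B = - teff_list (sn T); n = card Q in
        (\<exists>a b. proj up = concat (replicate a (sp S)) \<and> proj dn = concat (replicate b (sn T)) \<and>
           int a * A \<le> 2 * int (plen cap) + 2 * lcm A B \<and>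
           int b * B \<le> 2 * int (plen cap) + 2 * lcm A B) \<and>
        (\<forall>xs ys zs. proj cap = xs @ ys @ zs \<and> is_cycle Tp ys \<longrightarrow> \<not> (gcd A B dvd teff_list ys)) \<and>
        snd (ptgt up) > n \<and> snd (psrc dn) > n \<and>
        distinct (confs pf @ confs sf)))"

end

theory Submission
  imports Defs
begin


definition lastc :: "'q conf \<Rightarrow> 'q trans list \<Rightarrow> 'q conf" where
  "lastc \<gamma> ts = last (confs_from \<gamma> ts)"

lemma confs_from_ne[simp]: "confs_from \<gamma> ts \<noteq> []" by (cases ts) auto
lemma confs_from_length[simp]: "length (confs_from \<gamma> ts) = Suc (length ts)"
  by (induction ts arbitrary: \<gamma>) auto
lemma confs_from_0[simp]: "confs_from \<gamma> ts ! 0 = \<gamma>" by (cases ts) auto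
lemma confs_from_Suc[simp]: "confs_from \<gamma> (t # ts) ! Suc k = confs_from (fire \<gamma> t) ts ! k" by simp
lemma lastc_Nil[simp]: "lastc \<gamma> [] = \<gamma>" by (simp add: lastc_def)
lemma lastc_Cons[simp]: "lastc \<gamma> (t#ts) = lastc (fire \<gamma> t) ts" by (simp add: lastc_def)

lemma confs_from_hdtl: "confs_from \<gamma> ys = \<gamma> # tl (confs_from \<gamma> ys)" by (cases ys) auto

lemma confs_from_append: "confs_from \<gamma> (xs@ys) = confs_from \<gamma> xs @ tl (confs_from (lastc \<gamma> xs) ys)"
  by (induction xs arbitrary: \<gamma>) (auto simp: lastc_def intro: confs_from_hdtl)

lemma lastc_append: "lastc \<gamma> (xs@ys) = lastc (lastc \<gamma> xs) ys"
  by (induction xs arbitrary: \<gamma>) auto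

lemma is_run_append: "is_run Tp Tz \<gamma> (xs@ys) = (is_run Tp Tz \<gamma> xs \<and> is_run Tp Tz (lastc \<gamma> xs) ys)"
  by (induction xs arbitrary: \<gamma>) auto

lemma lastc_nth: "lastc \<gamma> ts = confs_from \<gamma> ts ! length ts"
  by (simp add: lastc_def last_conv_nth)

lemma confs_from_nth_app1: "k \<le> length xs \<Longrightarrow> confs_from \<gamma> (xs@ys) ! k = confs_from \<gamma> xs ! k"
  by (simp add: confs_from_append nth_append)

lemma confs_from_nth_app2: "k \<le> length ys \<Longrightarrow> confs_from \<gamma> (xs@ys) ! (length xs + k) = confs_from (lastc \<gamma> xs) ys ! k"
proof (induction xs arbitrary: \<gamma>)
  case Nil then show ?case by simp
next
  case (Cons a xs) then show ?case by simp
qed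

lemma lastc_take: "p \<le> length ts \<Longrightarrow> lastc \<gamma> (take p ts) = confs_from \<gamma> ts ! p"
proof (induction ts arbitrary: \<gamma> p)
  case Nil then show ?case by simp
next
  case (Cons t ts) then show ?case by (cases p) auto
qed

lemma confs_from_take: "p \<le> length ts \<Longrightarrow> k \<le> p \<Longrightarrow> confs_from \<gamma> (take p ts) ! k = confs_from \<gamma> ts ! k"
  using confs_from_nth_app1[of k "take p ts" \<gamma> "drop p ts"] by simp

lemma confs_from_drop: "p \<le> length ts \<Longrightarrow> k \<le> length ts - p \<Longrightarrow>
   confs_from (confs_from \<gamma> ts ! p) (drop p ts) ! k = confs_from \<gamma> ts ! (p + k)"
  using confs_from_nth_app2[where k=k and ys="drop p ts" and xs="take p ts" and \<gamma>=\<gamma>] lastc_take[of p ts \<gamma>] by simp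

fun prun :: "'q trans set \<Rightarrow> 'q conf \<Rightarrow> 'q trans list \<Rightarrow> 'q conf \<Rightarrow> bool" where
  "prun Tp \<gamma> [] \<gamma>' = (\<gamma>' = \<gamma> \<and> snd \<gamma> > 0)"
| "prun Tp \<gamma> (t#ts) \<gamma>' = (snd \<gamma> > 0 \<and> t \<in> Tp \<and> tsrc t = fst \<gamma> \<and> prun Tp (fire \<gamma> t) ts \<gamma>')"

lemma prun_append: "prun Tp \<gamma> (xs@ys) \<gamma>'' = (\<exists>\<gamma>'. prun Tp \<gamma> xs \<gamma>' \<and> prun Tp \<gamma>' ys \<gamma>'')"
  by (induction xs arbitrary: \<gamma>) (auto elim: prun.elims)

lemma prun_pos: "prun Tp \<gamma> ts \<gamma>' \<Longrightarrow> snd \<gamma> > 0"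
  by (cases ts) simp_all

lemma prun_is_run: "prun Tp \<gamma> ts \<gamma>' \<Longrightarrow> is_run Tp Tz \<gamma> ts \<and> lastc \<gamma> ts = \<gamma>' \<and> (\<forall>k\<le>length ts. snd (confs_from \<gamma> ts ! k) > 0)"
proof (induction ts arbitrary: \<gamma>)
  case Nil then show ?case by simp
next
  case (Cons t ts)
  then have h: "snd \<gamma> > 0" "t \<in> Tp" "tsrc t = fst \<gamma>" "prun Tp (fire \<gamma> t) ts \<gamma>'" by auto
  note IH = Cons.IH[OF h(4)]
  have "\<forall>k\<le>length (t#ts). snd (confs_from \<gamma> (t#ts) ! k) > 0"
  proof (intro allI impI)
    fix k assume "k \<le> length (t#ts)"
    then show "snd (confs_from \<gamma> (t#ts) ! k) > 0" using h(1) IH by (cases k) auto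
  qed
  then show ?case using h IH by (auto simp: fireable_def)
qed

lemma run_prun: "is_run Tp Tz \<gamma> ts \<Longrightarrow> (\<forall>k\<le>length ts. snd (confs_from \<gamma> ts ! k) > 0) \<Longrightarrow> prun Tp \<gamma> ts (lastc \<gamma> ts)"
proof (induction ts arbitrary: \<gamma>)
  case Nil then show ?case by simp
next
  case (Cons t ts)
  have "snd \<gamma> > 0" using Cons.prems(2)[rule_format, of 0] by simp
  moreover have "\<forall>k\<le>length ts. snd (confs_from (fire \<gamma> t) ts ! k) > 0"
    using Cons.prems(2) by (metis Suc_le_mono confs_from_Suc length_Cons)
  ultimately show ?case using Cons by (auto simp: fireable_def)
qed

lemma prun_shift: "prun Tp \<gamma> ts \<gamma>' \<Longrightarrow> prun Tp (fst \<gamma>, snd \<gamma> + d) ts (fst \<gamma>', snd \<gamma>' + d)"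
proof (induction ts arbitrary: \<gamma>)
  case Nil then show ?case by auto
next
  case (Cons t ts)
  then have h: "snd \<gamma> > 0" "t \<in> Tp" "tsrc t = fst \<gamma>" "prun Tp (fire \<gamma> t) ts \<gamma>'" by auto
  have "snd (fire \<gamma> t) > 0" using prun_pos[OF h(4)] .
  then have "fire (fst \<gamma>, snd \<gamma> + d) t = (fst (fire \<gamma> t), snd (fire \<gamma> t) + d)"
    by (auto simp: fire_def)
  then show ?case using h Cons.IH[OF h(4)] by auto
qed

lemma prun_eff: "prun Tp \<gamma> ts \<gamma>' \<Longrightarrow> int (snd \<gamma>') = int (snd \<gamma>) + teff_list ts"
proof (induction ts arbitrary: \<gamma>)
  case Nil then show ?case by (simp add: teff_list_def)
next
  case (Cons t ts)
  then have h: "prun Tp (fire \<gamma> t) ts \<gamma>'" by auto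
  have "snd (fire \<gamma> t) > 0" using prun_pos[OF h] .
  then have "int (snd (fire \<gamma> t)) = int (snd \<gamma>) + teff t" by (auto simp: fire_def)
  then show ?case using Cons.IH[OF h] by (simp add: teff_list_def)
qed

lemma consistent_Cons: "consistent (t#ts) = (consistent ts \<and> (ts \<noteq> [] \<longrightarrow> ttgt t = tsrc (hd ts)))"
proof
  assume h: "consistent (t#ts)"
  have "consistent ts" unfolding consistent_def
  proof (intro allI impI)
    fix i assume "Suc i < length ts"
    then show "ttgt (ts ! i) = tsrc (ts ! Suc i)" using h[unfolded consistent_def, rule_format, of "Suc i"] by simp
  qed
  moreover have "ts \<noteq> [] \<longrightarrow> ttgt t = tsrc (hd ts)"
    using h[unfolded consistent_def, rule_format, of 0] by (auto simp: hd_conv_nth)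
  ultimately show "consistent ts \<and> (ts \<noteq> [] \<longrightarrow> ttgt t = tsrc (hd ts))" by simp
next
  assume h: "consistent ts \<and> (ts \<noteq> [] \<longrightarrow> ttgt t = tsrc (hd ts))"
  show "consistent (t#ts)" unfolding consistent_def
  proof (intro allI impI)
    fix i assume i: "Suc i < length (t#ts)"
    show "ttgt ((t#ts) ! i) = tsrc ((t#ts) ! Suc i)"
    proof (cases i)
      case 0 then show ?thesis using h i by (auto simp: hd_conv_nth)
    next
      case (Suc j) then show ?thesis using h i by (auto simp: consistent_def)
    qed
  qed
qed

lemma prun_cons: "prun Tp \<gamma> ts \<gamma>' \<Longrightarrow> set ts \<subseteq> Tp \<and> consistent ts \<and> (ts \<noteq> [] \<longrightarrow> tsrc (hd ts) = fst \<gamma> \<and> ttgt (last ts) = fst \<gamma>')"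
proof (induction ts arbitrary: \<gamma>)
  case Nil then show ?case by (simp add: consistent_def)
next
  case (Cons t ts)
  then have h: "prun Tp (fire \<gamma> t) ts \<gamma>'" by auto
  have "fst (fire \<gamma> t) = ttgt t" by (simp add: fire_def)
  then show ?case using Cons.IH[OF h] Cons.prems by (auto simp: consistent_Cons)
qed

lemma prun_take: "prun Tp \<gamma> ts \<gamma>' \<Longrightarrow> p \<le> length ts \<Longrightarrow> prun Tp \<gamma> (take p ts) (confs_from \<gamma> ts ! p)"
proof (induction ts arbitrary: \<gamma> p)
  case Nil then show ?case by simp
next
  case (Cons t ts) then show ?case by (cases p) auto
qed

lemma prun_drop: "prun Tp \<gamma> ts \<gamma>' \<Longrightarrow> p \<le> length ts \<Longrightarrow> prun Tp (confs_from \<gamma> ts ! p) (drop p ts) \<gamma>'"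
proof (induction ts arbitrary: \<gamma> p)
  case Nil then show ?case by simp
next
  case (Cons t ts) then show ?case by (cases p) auto
qed

lemma prun_states: "prun Tp \<gamma> ts \<gamma>' \<Longrightarrow> fst \<gamma> \<in> Q \<Longrightarrow> Tp \<subseteq> Q \<times> UNIV \<times> Q \<Longrightarrow> k \<le> length ts \<Longrightarrow> fst (confs_from \<gamma> ts ! k) \<in> Q"
proof (induction ts arbitrary: \<gamma> k)
  case Nil then show ?case by simp
next
  case (Cons t ts)
  then have h: "prun Tp (fire \<gamma> t) ts \<gamma>'" "t \<in> Tp" by auto
  have "fst (fire \<gamma> t) \<in> Q" using h(2) Cons.prems(3) by (auto simp: fire_def ttgt_def)
  then show ?case using Cons h by (cases k) auto
qed

lemma chain_prun: "set ts \<subseteq> Tp \<Longrightarrow> \<forall>t\<in>set ts. teff t \<ge> -1 \<Longrightarrow> consistent ts \<Longrightarrow> (ts \<noteq> [] \<Longrightarrow> tsrc (hd ts) = s)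
  \<Longrightarrow> c > length ts \<Longrightarrow> prun Tp (s,c) ts (if ts = [] then s else ttgt (last ts), nat (int c + teff_list ts))"
proof (induction ts arbitrary: s c)
  case Nil then show ?case by (simp add: teff_list_def)
next
  case (Cons t ts)
  have f: "fire (s,c) t = (ttgt t, nat (int c + teff t))" by (simp add: fire_def)
  have c1: "nat (int c + teff t) > length ts" using Cons.prems by auto
  have "prun Tp (ttgt t, nat (int c + teff t)) ts (if ts = [] then ttgt t else ttgt (last ts), nat (int (nat (int c + teff t)) + teff_list ts))"
    using Cons.IH[of "ttgt t" "nat (int c + teff t)"] Cons.prems c1 by (auto simp: consistent_Cons)
  moreover have "int (nat (int c + teff t)) = int c + teff t" using c1 by simp
  ultimately show ?case using Cons.prems f by (auto simp: teff_list_def add.assoc)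
qed

lemma pump_up: "is_cycle Tp \<sigma> \<Longrightarrow> \<forall>t\<in>set \<sigma>. teff t \<ge> -1 \<Longrightarrow> teff_list \<sigma> = int a \<Longrightarrow> c > length \<sigma>
  \<Longrightarrow> prun Tp (tsrc (hd \<sigma>), c) (concat (replicate x \<sigma>)) (tsrc (hd \<sigma>), c + x * a)"
proof (induction x arbitrary: c)
  case 0 then show ?case by simp
next
  case (Suc x)
  have "prun Tp (tsrc (hd \<sigma>), c) \<sigma> (tsrc (hd \<sigma>), nat (int c + teff_list \<sigma>))"
    using chain_prun[of \<sigma> Tp "tsrc (hd \<sigma>)" c] Suc.prems by (auto simp: is_cycle_def)
  moreover have "nat (int c + teff_list \<sigma>) = c + a" using Suc.prems by simp
  ultimately have "prun Tp (tsrc (hd \<sigma>), c) \<sigma> (tsrc (hd \<sigma>), c + a)" by simp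
  moreover have "prun Tp (tsrc (hd \<sigma>), c + a) (concat (replicate x \<sigma>)) (tsrc (hd \<sigma>), c + a + x * a)"
    using Suc by auto
  ultimately show ?case by (auto simp: prun_append add.assoc)
qed

lemma pump_down: "is_cycle Tp \<sigma> \<Longrightarrow> \<forall>t\<in>set \<sigma>. teff t \<ge> -1 \<Longrightarrow> teff_list \<sigma> = - int b \<Longrightarrow> c > length \<sigma>
  \<Longrightarrow> prun Tp (tsrc (hd \<sigma>), c + y * b) (concat (replicate y \<sigma>)) (tsrc (hd \<sigma>), c)"
proof (induction y)
  case 0 then show ?case by simp
next
  case (Suc y)
  have ch: "prun Tp (tsrc (hd \<sigma>), c + Suc y * b) \<sigma> (if \<sigma> = [] then tsrc (hd \<sigma>) else ttgt (last \<sigma>), nat (int (c + Suc y * b) + teff_list \<sigma>))"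
    by (rule chain_prun) (use Suc.prems in \<open>auto simp: is_cycle_def\<close>)
  have e: "int (c + Suc y * b) + teff_list \<sigma> = int (c + y * b)" using Suc.prems(3) by simp
  have "prun Tp (tsrc (hd \<sigma>), c + Suc y * b) \<sigma> (tsrc (hd \<sigma>), c + y * b)"
    using ch Suc.prems(1) unfolding e nat_int by (simp add: is_cycle_def)
  moreover have "prun Tp (tsrc (hd \<sigma>), c + y * b) (concat (replicate y \<sigma>)) (tsrc (hd \<sigma>), c)"
    using Suc by blast
  ultimately show ?case by (auto simp: prun_append)
qed




definition nz :: "'q conf list \<Rightarrow> nat" where "nz L = length (filter (\<lambda>\<gamma>. snd \<gamma> = 0) L)"

lemma set_butlast_tl: "set (butlast (tl L)) = {L ! k | k. 0 < k \<and> k < length L - 1}"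
proof (rule set_eqI, rule iffI)
  fix x assume "x \<in> set (butlast (tl L))"
  then obtain k where k: "k < length (butlast (tl L))" "butlast (tl L) ! k = x" by (auto simp: in_set_conv_nth)
  then have "x = L ! Suc k" by (simp add: nth_butlast nth_tl)
  then show "x \<in> {L ! k | k. 0 < k \<and> k < length L - 1}" using k(1) by auto
next
  fix x assume "x \<in> {L ! k | k. 0 < k \<and> k < length L - 1}"
  then obtain k where k: "0 < k" "k < length L - 1" "x = L ! k" by auto
  then have "butlast (tl L) ! (k - 1) = x" by (simp add: nth_butlast nth_tl)
  moreover have "k - 1 < length (butlast (tl L))" using k by simp
  ultimately show "x \<in> set (butlast (tl L))" by (metis nth_mem)
qed

lemma length_confs: "length (confs \<rho>) = Suc (plen \<rho>)" by (simp add: confs_def plen_def)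

lemma set_inter: "set (inter_confs \<rho>) = {confs \<rho> ! k | k. 0 < k \<and> k < plen \<rho>}"
  unfolding inter_confs_def set_butlast_tl length_confs by simp

lemma is_arc_inner: "is_arc Tp Tz \<rho> \<Longrightarrow> 0 < k \<Longrightarrow> k < plen \<rho> \<Longrightarrow> snd (confs \<rho> ! k) > 0"
  unfolding is_arc_def set_inter by blast

lemma is_arc_intro: "is_path Tp Tz \<rho> \<Longrightarrow> plen \<rho> \<ge> 1 \<Longrightarrow> snd (psrc \<rho>) = 0 \<Longrightarrow> snd (ptgt \<rho>) = 0
  \<Longrightarrow> (\<And>k. 0 < k \<Longrightarrow> k < plen \<rho> \<Longrightarrow> snd (confs \<rho> ! k) > 0) \<Longrightarrow> is_arc Tp Tz \<rho>"
  unfolding is_arc_def set_inter by blast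

lemma path_eq: "\<rho> = (psrc \<rho>, proj \<rho>)" by (simp add: psrc_def proj_def)
lemma confs_eq: "confs \<rho> = confs_from (psrc \<rho>) (proj \<rho>)" by (simp add: confs_def psrc_def proj_def)
lemma ptgt_eq: "ptgt \<rho> = lastc (psrc \<rho>) (proj \<rho>)" by (simp add: ptgt_def lastc_def confs_eq)
lemma plen_eq: "plen \<rho> = length (proj \<rho>)" by (simp add: plen_def proj_def)
lemma is_path_eq: "is_path Tp Tz \<rho> = is_run Tp Tz (psrc \<rho>) (proj \<rho>)" by (simp add: is_path_def psrc_def proj_def)

lemma list_split3: "length L \<ge> 2 \<Longrightarrow> L = hd L # butlast (tl L) @ [last L]"
  by (cases L) (auto simp: append_butlast_last_id)

lemma nz_append: "nz (a @ b) = nz a + nz b" by (simp add: nz_def)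

lemma arc_nz: "is_arc Tp Tz \<rho> \<Longrightarrow> nz (confs \<rho>) = 2"
proof -
  assume a: "is_arc Tp Tz \<rho>"
  let ?L = "confs \<rho>"
  have l: "length ?L \<ge> 2" using a by (simp add: length_confs is_arc_def)
  have h: "snd (hd ?L) = 0" using a by (simp add: is_arc_def confs_eq hd_conv_nth)
  have t: "snd (last ?L) = 0" using a by (simp add: is_arc_def ptgt_def)
  have m: "filter (\<lambda>\<gamma>. snd \<gamma> = 0) (butlast (tl ?L)) = []" using a
    by (auto simp: is_arc_def inter_confs_def filter_empty_conv)
  have e: "?L = [hd ?L] @ butlast (tl ?L) @ [last ?L]" using list_split3[OF l] by simp
  have "nz ?L = nz ([hd ?L] @ butlast (tl ?L) @ [last ?L])" using e by (rule arg_cong)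
  also have "\<dots> = 2" using h t m by (simp add: nz_append nz_def)
  finally show ?thesis .
qed

fun arcs_from :: "'q trans set \<Rightarrow> 'q trans set \<Rightarrow> 'q conf \<Rightarrow> 'q path list \<Rightarrow> bool" where
  "arcs_from Tp Tz \<gamma> [] = True"
| "arcs_from Tp Tz \<gamma> (r#rs) = (is_arc Tp Tz r \<and> psrc r = \<gamma> \<and> arcs_from Tp Tz (ptgt r) rs)"

fun endc :: "'q conf \<Rightarrow> 'q path list \<Rightarrow> 'q conf" where
  "endc \<gamma> [] = \<gamma>"
| "endc \<gamma> (r#rs) = endc (ptgt r) rs"

lemma endc_append: "endc \<gamma> (xs@ys) = endc (endc \<gamma> xs) ys"
  by (induction xs arbitrary: \<gamma>) auto

lemma arcs_from_append: "arcs_from Tp Tz \<gamma> (xs@ys) = (arcs_from Tp Tz \<gamma> xs \<and> arcs_from Tp Tz (endc \<gamma> xs) ys)"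
  by (induction xs arbitrary: \<gamma>) auto

lemma endc_last: "rs \<noteq> [] \<Longrightarrow> endc \<gamma> rs = ptgt (last rs)"
  by (induction rs arbitrary: \<gamma>) auto

lemma arcs_chain: "arcs_from Tp Tz \<gamma> rs \<Longrightarrow> snd \<gamma> = 0 \<Longrightarrow>
   is_run Tp Tz \<gamma> (concat (map proj rs)) \<and> lastc \<gamma> (concat (map proj rs)) = endc \<gamma> rs
   \<and> nz (confs_from \<gamma> (concat (map proj rs))) = Suc (length rs)"
proof (induction rs arbitrary: \<gamma>)
  case Nil then show ?case by (simp add: nz_def)
next
  case (Cons r rs)
  then have a: "is_arc Tp Tz r" "psrc r = \<gamma>" "arcs_from Tp Tz (ptgt r) rs" by auto
  have z: "snd (ptgt r) = 0" using a(1) by (simp add: is_arc_def)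
  note IH = Cons.IH[OF a(3) z]
  have run: "is_run Tp Tz \<gamma> (proj r)" using a(1,2) by (simp add: is_arc_def is_path_eq)
  have lc: "lastc \<gamma> (proj r) = ptgt r" using a(2) by (simp add: ptgt_eq)
  have n1: "nz (confs_from \<gamma> (proj r)) = 2" using arc_nz[OF a(1)] a(2) by (simp add: confs_eq)
  let ?X = "confs_from (ptgt r) (concat (map proj rs))"
  have "nz ?X = Suc (nz (tl ?X))"
  proof -
    have "?X = ptgt r # tl ?X" by (rule confs_from_hdtl)
    then have "nz ?X = nz (ptgt r # tl ?X)" by (rule arg_cong)
    then show ?thesis using z by (simp add: nz_def)
  qed
  then show ?case using IH run lc n1
    by (simp add: is_run_append lastc_append confs_from_append nz_append)
qed

lemma arcs_from_idx: "(\<forall>i<length rs. is_arc Tp Tz (rs!i)) \<Longrightarrow> (rs \<noteq> [] \<longrightarrow> psrc (hd rs) = \<gamma>)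
   \<Longrightarrow> (\<forall>i. Suc i < length rs \<longrightarrow> ptgt (rs!i) = psrc (rs ! Suc i)) \<Longrightarrow> arcs_from Tp Tz \<gamma> rs"
proof (induction rs arbitrary: \<gamma>)
  case Nil then show ?case by simp
next
  case (Cons r rs)
  have "arcs_from Tp Tz (ptgt r) rs"
  proof (rule Cons.IH)
    show "\<forall>i<length rs. is_arc Tp Tz (rs ! i)" using Cons.prems(1) by auto
    show "rs \<noteq> [] \<longrightarrow> psrc (hd rs) = ptgt r" using Cons.prems(3)[rule_format, of 0] by (auto simp: hd_conv_nth)
    show "\<forall>i. Suc i < length rs \<longrightarrow> ptgt (rs ! i) = psrc (rs ! Suc i)" using Cons.prems(3) by auto
  qed
  then show ?case using Cons.prems(1)[rule_format, of 0] Cons.prems(2) by auto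
qed




locale setup6 =
  fixes Q :: "'q set" and Tp Tz :: "'q trans set"
    and sp sn :: "'q set \<Rightarrow> 'q trans list"
    and n :: nat and \<alpha> \<beta> :: "'q conf" and \<rho> :: "'q path" and rs :: "'q path list"
    and Nset :: "nat set" and Sf Tf :: "nat \<Rightarrow> 'q set" and dec :: "nat \<Rightarrow> 'q ndec"
  assumes ocs: "ocs Q Tp Tz" and n_def: "n = card Q"
    and sig: "sigma_ok Q Tp sp sn"
    and alpha0: "snd \<alpha> = 0"
    and rho: "is_path Tp Tz \<rho>" "psrc \<rho> = \<alpha>" "ptgt \<rho> = \<beta>"
    and rho_min: "\<And>\<rho>'. is_path Tp Tz \<rho>' \<Longrightarrow> psrc \<rho>' = \<alpha> \<Longrightarrow> ptgt \<rho>' = \<beta> \<Longrightarrow> zeros \<rho> \<le> zeros \<rho>'"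
    and dec_rho: "decomp \<rho> rs"
    and arcs: "\<And>i. i < length rs \<Longrightarrow> is_arc Tp Tz (rs ! i)"
    and Nset: "Nset \<subseteq> {..<length rs}"
    and normal: "\<And>i. i \<in> Nset \<Longrightarrow> good_dec Q Tp Tz sp sn (rs ! i) (Sf i) (Tf i) (dec i)"
begin

lemma Tp_sub: "Tp \<subseteq> Q \<times> {-1,0,1} \<times> Q" using ocs by (simp add: ocs_def)
lemma finQ: "finite Q" using ocs by (simp add: ocs_def)

lemma teff_ge: "t \<in> Tp \<Longrightarrow> teff t \<ge> -1" using Tp_sub by (auto simp: teff_def)
lemma teff_le: "t \<in> Tp \<Longrightarrow> teff t \<le> 1" using Tp_sub by (auto simp: teff_def)
lemma tsrc_Q: "t \<in> Tp \<Longrightarrow> tsrc t \<in> Q" using Tp_sub by (auto simp: tsrc_def)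
lemma Tp_sub': "Tp \<subseteq> Q \<times> UNIV \<times> Q" using Tp_sub by auto

lemma simple_len: "simple_cycle Tp \<sigma> \<Longrightarrow> length \<sigma> \<le> n"
proof -
  assume s: "simple_cycle Tp \<sigma>"
  then have d: "distinct (map tsrc \<sigma>)" and sub: "set \<sigma> \<subseteq> Tp" by (auto simp: simple_cycle_def is_cycle_def)
  have "set (map tsrc \<sigma>) \<subseteq> Q" using sub tsrc_Q by auto
  then have "card (set (map tsrc \<sigma>)) \<le> card Q" using finQ by (simp add: card_mono)
  then show ?thesis using distinct_card[OF d] n_def by simp
qed

lemma dec_facts:
  assumes i: "i \<in> Nset"
  shows "is_scc Q Tp (Sf i) \<and> pos_enabled Tp (Sf i) \<and> is_scc Q Tp (Tf i) \<and> neg_enabled Tp (Tf i)"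
proof -
  obtain pf up cap dn sf where d: "dec i = (pf,up,cap,dn,sf)" by (cases "dec i") auto
  show ?thesis using normal[OF i] unfolding good_dec_def normal_dec_def d by simp
qed

lemma sp_facts: "is_scc Q Tp S \<Longrightarrow> pos_enabled Tp S \<Longrightarrow>
   simple_cycle Tp (sp S) \<and> teff_list (sp S) > 0 \<and> contained (sp S) S"
  using sig by (simp add: sigma_ok_def)
lemma sn_facts: "is_scc Q Tp T \<Longrightarrow> neg_enabled Tp T \<Longrightarrow>
   simple_cycle Tp (sn T) \<and> teff_list (sn T) < 0 \<and> contained (sn T) T"
  using sig by (simp add: sigma_ok_def)

lemma arc_parts:
  assumes i: "i \<in> Nset"
  obtains \<gamma>0 U \<gamma>1 C \<gamma>2 V where
   "rs ! i = (\<gamma>0, U @ C @ V)" "cap_of (dec i) = (\<gamma>1, C)"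
   "is_run Tp Tz \<gamma>0 U" "lastc \<gamma>0 U = \<gamma>1" "snd \<gamma>0 = 0"
   "\<And>k. 0 < k \<Longrightarrow> k \<le> length U \<Longrightarrow> snd (confs_from \<gamma>0 U ! k) > 0"
   "prun Tp \<gamma>1 C \<gamma>2"
   "is_run Tp Tz \<gamma>2 V" "lastc \<gamma>2 V = ptgt (rs ! i)" "snd (ptgt (rs ! i)) = 0"
   "\<And>k. k < length V \<Longrightarrow> snd (confs_from \<gamma>2 V ! k) > 0"
   "snd \<gamma>1 > n" "snd \<gamma>2 > n" "fst \<gamma>1 = base (sp (Sf i))" "fst \<gamma>2 = base (sn (Tf i))"
   "psrc (rs ! i) = \<gamma>0"
proof -
  obtain pf up cap dn sf where d: "dec i = (pf,up,cap,dn,sf)" by (cases "dec i") auto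
  have g: "good_dec Q Tp Tz sp sn (rs ! i) (Sf i) (Tf i) (pf,up,cap,dn,sf)" using normal[OF i] d by simp
  have nd: "decomp (rs ! i) [pf,up,cap,dn,sf]" and paths: "is_path Tp Tz pf" "is_path Tp Tz up"
    "is_path Tp Tz cap" "is_path Tp Tz dn" "is_path Tp Tz sf"
    and arc: "is_arc Tp Tz (rs ! i)"
    and bases: "fst (psrc cap) = base (sp (Sf i))" "fst (ptgt cap) = base (sn (Tf i))"
    and big: "snd (ptgt up) > n" "snd (psrc dn) > n"
    using g unfolding good_dec_def normal_dec_def n_def by (auto simp: Let_def)
  have l0: "psrc pf = psrc (rs ! i)" using nd by (simp add: decomp_def)
  have ch: "\<forall>k. Suc k < length [pf,up,cap,dn,sf] \<longrightarrow> ptgt ([pf,up,cap,dn,sf] ! k) = psrc ([pf,up,cap,dn,sf] ! Suc k)"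
    using nd unfolding decomp_def by blast
  have l1: "ptgt pf = psrc up" using ch[rule_format, of 0] by simp
  have l2: "ptgt up = psrc cap" using ch[rule_format, of "Suc 0"] by simp
  have l3: "ptgt cap = psrc dn" using ch[rule_format, of "Suc (Suc 0)"] by simp
  have l4: "ptgt dn = psrc sf" using ch[rule_format, of "Suc (Suc (Suc 0))"] by simp
  have pj: "proj (rs ! i) = proj pf @ proj up @ proj cap @ proj dn @ proj sf" using nd by (simp add: decomp_def)
  define \<gamma>0 U \<gamma>1 C \<gamma>2 V where defs: "\<gamma>0 = psrc (rs ! i)" "U = proj pf @ proj up" "\<gamma>1 = psrc cap"
     "C = proj cap" "\<gamma>2 = ptgt cap" "V = proj dn @ proj sf"
  have e1: "rs ! i = (\<gamma>0, U @ C @ V)" using pj path_eq[of "rs ! i"] defs by simp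
  have e2: "cap_of (dec i) = (\<gamma>1, C)" using d path_eq[of cap] defs by (simp add: cap_of_def)
  have rU: "is_run Tp Tz \<gamma>0 U" using paths(1,2) l0 l1 defs by (simp add: is_run_append is_path_eq ptgt_eq)
  have lU: "lastc \<gamma>0 U = \<gamma>1" using l0 l1 l2 defs by (simp add: lastc_append ptgt_eq)
  have rC: "is_run Tp Tz \<gamma>1 C" using paths(3) defs by (simp add: is_path_eq)
  have lC: "lastc \<gamma>1 C = \<gamma>2" using defs by (simp add: ptgt_eq)
  have rV: "is_run Tp Tz \<gamma>2 V" using paths(4,5) l3 l4 defs by (simp add: is_run_append is_path_eq ptgt_eq)
  have lV0: "lastc \<gamma>2 V = ptgt sf" using l3 l4 defs by (simp add: lastc_append ptgt_eq)
  have tgt: "ptgt (rs ! i) = lastc \<gamma>2 V"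
    using e1 lU lC by (metis lastc_append ptgt_eq proj_def psrc_def fst_conv snd_conv)
  have z0: "snd \<gamma>0 = 0" using arc defs by (simp add: is_arc_def)
  have zt: "snd (ptgt (rs ! i)) = 0" using arc by (simp add: is_arc_def)
  have b1: "snd \<gamma>1 > n" using big l2 defs by simp
  have b2: "snd \<gamma>2 > n" using big l3 defs by simp
  have F: "confs (rs ! i) = confs_from \<gamma>0 (U @ C @ V)" using e1 by (simp add: confs_def)
  have PL: "plen (rs ! i) = length U + length C + length V" using e1 by (simp add: plen_def)
  have inner: "\<And>k. 0 < k \<Longrightarrow> k < length U + length C + length V \<Longrightarrow> snd (confs_from \<gamma>0 (U @ C @ V) ! k) > 0"
    using is_arc_inner[OF arc] F PL by metis
  have pU: "snd (confs_from \<gamma>0 U ! k) > 0" if k: "0 < k" "k \<le> length U" for k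
  proof (cases "k = length U")
    case True then show ?thesis using lU b1 by (simp add: lastc_nth[symmetric])
  next
    case False
    then have "confs_from \<gamma>0 U ! k = confs_from \<gamma>0 (U @ C @ V) ! k" using k by (simp add: confs_from_nth_app1)
    then show ?thesis using inner[of k] k False by simp
  qed
  have pC: "\<forall>k\<le>length C. snd (confs_from \<gamma>1 C ! k) > 0"
  proof (intro allI impI)
    fix k assume k: "k \<le> length C"
    have eq: "confs_from \<gamma>1 C ! k = confs_from \<gamma>0 (U @ C @ V) ! (length U + k)"
      using k confs_from_nth_app2[of k "C @ V" \<gamma>0 U] confs_from_nth_app1[of k C \<gamma>1 V] lU by simp
    show "snd (confs_from \<gamma>1 C ! k) > 0"
    proof (cases "k = 0 \<or> k = length C")
      case True then show ?thesis using b1 b2 lC by (auto simp: lastc_nth[symmetric])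
    next
      case False then show ?thesis using eq inner[of "length U + k"] k by simp
    qed
  qed
  have pV: "snd (confs_from \<gamma>2 V ! k) > 0" if k: "k < length V" for k
  proof (cases "k = 0")
    case True then show ?thesis using b2 by simp
  next
    case False
    have "lastc \<gamma>0 (U @ C) = \<gamma>2" using lU lC by (simp add: lastc_append)
    then have "confs_from \<gamma>2 V ! k = confs_from \<gamma>0 ((U @ C) @ V) ! (length (U @ C) + k)"
      using k confs_from_nth_app2[of k V \<gamma>0 "U @ C"] by simp
    then show ?thesis using inner[of "length U + length C + k"] k False by (simp add: add.assoc)
  qed
  have pr: "prun Tp \<gamma>1 C \<gamma>2" using run_prun[OF rC pC] lC by simp
  show ?thesis
    apply (rule that[OF e1 e2 rU lU z0 pU pr rV _ zt pV b1 b2])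
    using tgt bases defs by auto
qed

end



context setup6 begin

lemma no_shortcut:
  assumes ij: "i < j" "j < length rs" and m: "is_arc Tp Tz m" "psrc m = psrc (rs ! i)" "ptgt m = ptgt (rs ! j)"
  shows False
proof -
  have af: "arcs_from Tp Tz \<alpha> rs"
    by (rule arcs_from_idx) (use arcs dec_rho rho(2) in \<open>auto simp: decomp_def\<close>)
  have pr: "proj \<rho> = concat (map proj rs)" using dec_rho by (simp add: decomp_def)
  note ch = arcs_chain[OF af alpha0]
  have zr: "zeros \<rho> = Suc (length rs)"
    using ch pr rho(2) by (simp add: zeros_def nz_def confs_eq)
  define mid where "mid = drop i (take (Suc j) rs)"
  have split: "rs = take i rs @ mid @ drop (Suc j) rs"
  proof -
    have "take i rs @ mid = take (Suc j) rs" unfolding mid_def using ij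
      by (metis append_take_drop_id min.absorb1 less_imp_le_nat le_SucI take_take)
    then show ?thesis by (metis append.assoc append_take_drop_id)
  qed
  define g where "g = endc \<alpha> (take i rs)"
  have af2: "arcs_from Tp Tz \<alpha> (take i rs)" "arcs_from Tp Tz g mid" "arcs_from Tp Tz (endc g mid) (drop (Suc j) rs)"
    using af split arcs_from_append[of Tp Tz \<alpha> "take i rs" "mid @ drop (Suc j) rs"]
      arcs_from_append[of Tp Tz g mid "drop (Suc j) rs"] unfolding g_def by metis+
  have midne: "mid \<noteq> []" using ij by (simp add: mid_def)
  have hdm: "hd mid = rs ! i" using ij by (simp add: mid_def hd_drop_conv_nth)
  have lastm: "last mid = rs ! j" using ij by (simp add: mid_def last_conv_nth)
  have pg: "psrc (rs ! i) = g" using af2(2) midne hdm by (cases mid) auto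
  have eg: "endc g mid = ptgt (rs ! j)" using endc_last[OF midne] lastm by simp
  define rs' where "rs' = take i rs @ [m] @ drop (Suc j) rs"
  have af': "arcs_from Tp Tz \<alpha> rs'"
    unfolding rs'_def arcs_from_append using af2 m pg eg by (simp add: g_def)
  note ch' = arcs_chain[OF af' alpha0]
  have ee: "endc \<alpha> rs' = endc \<alpha> rs"
    using split eg m(3) unfolding rs'_def by (metis endc_append endc.simps g_def)
  define \<rho>' where "\<rho>' = (\<alpha>, concat (map proj rs'))"
  have p1: "is_path Tp Tz \<rho>'" using ch' by (simp add: \<rho>'_def is_path_def)
  have p2: "psrc \<rho>' = \<alpha>" by (simp add: \<rho>'_def psrc_def)
  have p3: "ptgt \<rho>' = \<beta>"
  proof -
    have "ptgt \<rho>' = endc \<alpha> rs'" using ch' by (simp add: \<rho>'_def ptgt_eq psrc_def proj_def)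
    also have "\<dots> = endc \<alpha> rs" by (rule ee)
    also have "\<dots> = ptgt \<rho>" using ch pr rho(2) by (simp add: ptgt_eq)
    finally show ?thesis using rho(3) by simp
  qed
  have zr': "zeros \<rho>' = Suc (length rs')" using ch' by (simp add: zeros_def nz_def confs_def \<rho>'_def)
  have "length rs' < length rs" using ij by (simp add: rs'_def)
  then show False using rho_min[OF p1 p2 p3] zr zr' by simp
qed

end



context setup6 begin

lemma merge_false:
  assumes i: "i \<in> Nset" and j: "j \<in> Nset" and ij: "i < j"
   and p: "p \<le> plen (cap_of (dec i))" and q: "q \<le> plen (cap_of (dec j))"
   and st: "fst (confs (cap_of (dec i)) ! p) = fst (confs (cap_of (dec j)) ! q)"
   and xy: "snd (confs (cap_of (dec i)) ! p) + x * nat (teff_list (sp (Sf i)))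
            = snd (confs (cap_of (dec j)) ! q) + y * nat (- teff_list (sn (Tf j)))"
  shows False
proof -
  obtain \<gamma>0 U \<gamma>1 C \<gamma>2 V where Pi: "rs ! i = (\<gamma>0, U @ C @ V)" "cap_of (dec i) = (\<gamma>1, C)"
   "is_run Tp Tz \<gamma>0 U" "lastc \<gamma>0 U = \<gamma>1" "snd \<gamma>0 = 0"
   "\<And>k. 0 < k \<Longrightarrow> k \<le> length U \<Longrightarrow> snd (confs_from \<gamma>0 U ! k) > 0"
   "prun Tp \<gamma>1 C \<gamma>2" "snd \<gamma>1 > n" "fst \<gamma>1 = base (sp (Sf i))" "psrc (rs ! i) = \<gamma>0"
    using arc_parts[OF i] by metis
  obtain \<delta>0 U' \<delta>1 C' \<delta>2 V' where Pj: "cap_of (dec j) = (\<delta>1, C')"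
   "prun Tp \<delta>1 C' \<delta>2"
   "is_run Tp Tz \<delta>2 V'" "lastc \<delta>2 V' = ptgt (rs ! j)" "snd (ptgt (rs ! j)) = 0"
   "\<And>k. k < length V' \<Longrightarrow> snd (confs_from \<delta>2 V' ! k) > 0"
   "snd \<delta>2 > n" "fst \<delta>2 = base (sn (Tf j))"
    using arc_parts[OF j] by metis
  define \<sigma> where "\<sigma> = sp (Sf i)"
  define \<tau> where "\<tau> = sn (Tf j)"
  define a where "a = nat (teff_list \<sigma>)"
  define b where "b = nat (- teff_list \<tau>)"
  have sf: "simple_cycle Tp \<sigma>" "teff_list \<sigma> > 0" using dec_facts[OF i] sp_facts \<sigma>_def by blast+
  have tf: "simple_cycle Tp \<tau>" "teff_list \<tau> < 0" using dec_facts[OF j] sn_facts \<tau>_def by blast+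
  have sc: "is_cycle Tp \<sigma>" "\<forall>t\<in>set \<sigma>. teff t \<ge> -1" "teff_list \<sigma> = int a" "length \<sigma> \<le> n"
    using sf simple_len[OF sf(1)] teff_ge by (auto simp: simple_cycle_def is_cycle_def a_def)
  have tc: "is_cycle Tp \<tau>" "\<forall>t\<in>set \<tau>. teff t \<ge> -1" "teff_list \<tau> = - int b" "length \<tau> \<le> n"
    using tf simple_len[OF tf(1)] teff_ge by (auto simp: simple_cycle_def is_cycle_def b_def)
  have ci: "confs (cap_of (dec i)) = confs_from \<gamma>1 C" "plen (cap_of (dec i)) = length C"
    using Pi(2) by (simp_all add: confs_def plen_def)
  have cj: "confs (cap_of (dec j)) = confs_from \<delta>1 C'" "plen (cap_of (dec j)) = length C'"
    using Pj(1) by (simp_all add: confs_def plen_def)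
  define cp where "cp = confs_from \<gamma>1 C ! p"
  define cq where "cq = confs_from \<delta>1 C' ! q"
  have g1: "\<gamma>1 = (tsrc (hd \<sigma>), snd \<gamma>1)" using Pi(9) by (simp add: \<sigma>_def base_def prod_eq_iff)
  have d2: "\<delta>2 = (tsrc (hd \<tau>), snd \<delta>2)" using Pj(8) by (simp add: \<tau>_def base_def prod_eq_iff)
  have M1: "prun Tp \<gamma>1 (concat (replicate x \<sigma>)) (fst \<gamma>1, snd \<gamma>1 + x * a)"
    using pump_up[OF sc(1,2,3), of "snd \<gamma>1" x] sc(4) Pi(8) g1 by (metis fst_conv le_less_trans)
  have M2: "prun Tp (fst \<gamma>1, snd \<gamma>1 + x * a) (take p C) (fst cp, snd cp + x * a)"
    using prun_shift[OF prun_take[OF Pi(7)], of p "x * a"] p ci by (simp add: cp_def)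
  have M3: "prun Tp (fst cq, snd cq + y * b) (drop q C') (fst \<delta>2, snd \<delta>2 + y * b)"
    using prun_shift[OF prun_drop[OF Pj(2)], of q "y * b"] q cj by (simp add: cq_def)
  have M4: "prun Tp (fst \<delta>2, snd \<delta>2 + y * b) (concat (replicate y \<tau>)) \<delta>2"
    using pump_down[OF tc(1,2,3), of "snd \<delta>2" y] tc(4) Pj(7) d2 by (metis fst_conv le_less_trans)
  have eqc: "(fst cp, snd cp + x * a) = (fst cq, snd cq + y * b)"
    using st xy ci cj by (simp add: cp_def cq_def a_def b_def \<sigma>_def \<tau>_def)
  define M where "M = concat (replicate x \<sigma>) @ take p C @ drop q C' @ concat (replicate y \<tau>)"
  have PM: "prun Tp \<gamma>1 M \<delta>2" unfolding M_def prun_append using M1 M2 M3 M4 eqc by metis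
  note PMr = prun_is_run[OF PM, of Tz]
  define m where "m = (\<gamma>0, U @ M @ V')"
  have Vne: "V' \<noteq> []" using Pj(4,5,7) by auto
  have lm: "lastc \<gamma>0 (U @ M @ V') = ptgt (rs ! j)" using Pi(4) PMr Pj(4) by (simp add: lastc_append)
  have am: "is_arc Tp Tz m"
  proof (rule is_arc_intro)
    show "is_path Tp Tz m" using Pi(3,4) PMr Pj(3) by (simp add: m_def is_path_def is_run_append)
    show "plen m \<ge> 1" using Vne by (simp add: m_def plen_def Suc_le_eq)
    show "snd (psrc m) = 0" using Pi(5) by (simp add: m_def psrc_def)
    show "snd (ptgt m) = 0" using lm Pj(5) by (simp add: m_def ptgt_eq psrc_def proj_def)
    fix k assume k: "0 < k" "k < plen m"
    have kl: "k < length U + length M + length V'" using k by (simp add: m_def plen_def)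
    have cm: "confs m = confs_from \<gamma>0 (U @ (M @ V'))" by (simp add: m_def confs_def)
    show "snd (confs m ! k) > 0"
    proof (cases "k \<le> length U")
      case True then show ?thesis using Pi(6)[OF k(1) True] cm by (simp add: confs_from_nth_app1)
    next
      case False
      then obtain k1 where k1: "k = length U + k1" by (metis le_add_diff_inverse nat_le_linear)
      have e1: "confs m ! k = confs_from \<gamma>1 (M @ V') ! k1"
        using cm k1 kl confs_from_nth_app2[of k1 "M @ V'" \<gamma>0 U] Pi(4) by simp
      show ?thesis
      proof (cases "k1 \<le> length M")
        case True then show ?thesis using e1 PMr by (simp add: confs_from_nth_app1)
      next
        case False
        then obtain k2 where k2: "k1 = length M + k2" by (metis le_add_diff_inverse nat_le_linear)
        have "confs m ! k = confs_from \<delta>2 V' ! k2"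
          using e1 k2 kl k1 confs_from_nth_app2[of k2 V' \<gamma>1 M] PMr by simp
        moreover have "k2 < length V'" using kl k1 k2 by simp
        moreover have "k2 > 0" using False k2 by simp
        ultimately show ?thesis using Pj(6) by simp
      qed
    qed
  qed
  have jl: "j < length rs" using j Nset by auto
  show False using no_shortcut[OF ij jl am] Pi(10) lm by (simp add: m_def psrc_def ptgt_eq proj_def)
qed

lemma same_false:
  assumes i: "i \<in> Nset" and pq: "p < q" "q \<le> plen (cap_of (dec i))"
   and st: "fst (confs (cap_of (dec i)) ! p) = fst (confs (cap_of (dec i)) ! q)"
   and dv: "gcd (teff_list (sp (Sf i))) (- teff_list (sn (Tf i)))
              dvd (int (snd (confs (cap_of (dec i)) ! q)) - int (snd (confs (cap_of (dec i)) ! p)))"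
  shows False
proof -
  obtain pf up cap dn sf where d: "dec i = (pf,up,cap,dn,sf)" by (cases "dec i") auto
  have v: "\<forall>xs ys zs. proj cap = xs @ ys @ zs \<and> is_cycle Tp ys \<longrightarrow>
       \<not> (gcd (teff_list (sp (Sf i))) (- teff_list (sn (Tf i))) dvd teff_list ys)"
    using normal[OF i] d unfolding good_dec_def by (simp add: Let_def) blast
  obtain \<gamma>1 C \<gamma>2 where P: "cap_of (dec i) = (\<gamma>1, C)" "prun Tp \<gamma>1 C \<gamma>2"
    using arc_parts[OF i] by metis
  have capC: "proj cap = C" using P(1) d by (simp add: cap_of_def proj_def)
  have ci: "confs (cap_of (dec i)) = confs_from \<gamma>1 C" "plen (cap_of (dec i)) = length C"
    using P(1) by (simp_all add: confs_def plen_def)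
  define cp where "cp = confs_from \<gamma>1 C ! p"
  define cq where "cq = confs_from \<gamma>1 C ! q"
  define ys where "ys = take (q - p) (drop p C)"
  have ql: "q \<le> length C" using pq ci by simp
  have d1: "prun Tp cp (drop p C) \<gamma>2" using prun_drop[OF P(2)] ql pq by (simp add: cp_def)
  have "prun Tp cp ys (confs_from cp (drop p C) ! (q - p))"
    using prun_take[OF d1, of "q - p"] ql pq by (simp add: ys_def)
  moreover have "confs_from cp (drop p C) ! (q - p) = cq"
    using confs_from_drop[of p C "q - p" \<gamma>1] ql pq by (simp add: cp_def cq_def)
  ultimately have py: "prun Tp cp ys cq" by simp
  have yne: "ys \<noteq> []" using pq ql by (simp add: ys_def)
  have cyc: "is_cycle Tp ys" using prun_cons[OF py] yne st ci by (simp add: is_cycle_def cp_def cq_def)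
  have eff: "teff_list ys = int (snd cq) - int (snd cp)" using prun_eff[OF py] by simp
  have split: "proj cap = take p C @ ys @ drop (q - p) (drop p C)" using capC unfolding ys_def by (metis append_take_drop_id)
  have "\<not> (gcd (teff_list (sp (Sf i))) (- teff_list (sn (Tf i))) dvd teff_list ys)" using v split cyc by blast
  then show False using eff dv ci by (simp add: cp_def cq_def)
qed

end



lemma ex_xy_A:
  assumes "(A::int) > 0" "(B::int) > 0" "A dvd (int cq - int cp)"
  shows "\<exists>x y. cp + x * nat A = cq + y * nat B"
proof -
  obtain k where k: "int cq - int cp = A * k" using assms(3) by (auto elim: dvdE)
  have x0: "k + \<bar>k\<bar> * B \<ge> 0"
  proof -
    have "\<bar>k\<bar> * B \<ge> \<bar>k\<bar>" using assms(2) by (simp add: mult_le_cancel_left1 abs_ge_zero)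
    then show ?thesis by linarith
  qed
  have y0: "\<bar>k\<bar> * A \<ge> 0" using assms(1) by simp
  have "int cp + (k + \<bar>k\<bar> * B) * A = int cq + (\<bar>k\<bar> * A) * B" using k by (simp add: algebra_simps)
  then have "int (cp + nat (k + \<bar>k\<bar> * B) * nat A) = int (cq + nat (\<bar>k\<bar> * A) * nat B)"
    using x0 y0 assms(1,2) by (simp add: of_nat_mult)
  then show ?thesis by (metis of_nat_eq_iff)
qed

lemma ex_xy_B:
  assumes "(A::int) > 0" "(B::int) > 0" "B dvd (int cq - int cp)"
  shows "\<exists>x y. cp + x * nat A = cq + y * nat B"
proof -
  obtain k where k: "int cq - int cp = B * k" using assms(3) by (auto elim: dvdE)
  have y0: "\<bar>k\<bar> * A - k \<ge> 0"
  proof -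
    have "\<bar>k\<bar> * A \<ge> \<bar>k\<bar>" using assms(1) by (simp add: mult_le_cancel_left1 abs_ge_zero)
    then show ?thesis by linarith
  qed
  have x0: "\<bar>k\<bar> * B \<ge> 0" using assms(2) by simp
  have "int cp + (\<bar>k\<bar> * B) * A = int cq + (\<bar>k\<bar> * A - k) * B" using k by (simp add: algebra_simps)
  then have "int (cp + nat (\<bar>k\<bar> * B) * nat A) = int (cq + nat (\<bar>k\<bar> * A - k) * nat B)"
    using x0 y0 assms(1,2) by (simp add: of_nat_mult)
  then show ?thesis by (metis of_nat_eq_iff)
qed

context setup6 begin

lemma finNset: "finite Nset" using Nset finite_subset by blast

lemma base_Q: "is_scc Q Tp S \<Longrightarrow> pos_enabled Tp S \<Longrightarrow> base (sp S) \<in> Q"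
proof -
  assume a: "is_scc Q Tp S" "pos_enabled Tp S"
  then have "sp S \<noteq> []" "set (sp S) \<subseteq> Tp" using sp_facts[of S] by (auto simp: simple_cycle_def is_cycle_def)
  then have "hd (sp S) \<in> Tp" using hd_in_set by blast
  then show ?thesis using tsrc_Q by (simp add: base_def)
qed

lemma cap_states: "i \<in> Nset \<Longrightarrow> p \<le> plen (cap_of (dec i)) \<Longrightarrow> fst (confs (cap_of (dec i)) ! p) \<in> Q"
proof -
  assume i: "i \<in> Nset" and p: "p \<le> plen (cap_of (dec i))"
  obtain \<gamma>1 C \<gamma>2 where P: "cap_of (dec i) = (\<gamma>1, C)" "prun Tp \<gamma>1 C \<gamma>2" "fst \<gamma>1 = base (sp (Sf i))"
    using arc_parts[OF i] by metis
  have "fst \<gamma>1 \<in> Q" using P(3) base_Q dec_facts[OF i] by simp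
  then show ?thesis using prun_states[OF P(2) _ Tp_sub'] p P(1) by (simp add: confs_def plen_def)
qed

lemma count_gen:
  assumes I: "I \<subseteq> Nset" and K: "(K::int) > 0"
   and H: "\<And>i j cp cq. i \<in> I \<Longrightarrow> j \<in> I \<Longrightarrow> K dvd (int cq - int cp) \<Longrightarrow>
        (\<exists>x y. cp + x * nat (teff_list (sp (Sf i))) = cq + y * nat (- teff_list (sn (Tf j))))
        \<and> gcd (teff_list (sp (Sf i))) (- teff_list (sn (Tf i))) dvd (int cq - int cp)"
  shows "(\<Sum>i\<in>I. plen (cap_of (dec i))) \<le> n * nat K"
proof -
  define P where "P = Sigma I (\<lambda>i. {..plen (cap_of (dec i))})"
  define f where "f = (\<lambda>(i,p). (fst (confs (cap_of (dec i)) ! p), int (snd (confs (cap_of (dec i)) ! p)) mod K))"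
  have finI: "finite I" using I finNset finite_subset by blast
  have cardP: "card P = (\<Sum>i\<in>I. Suc (plen (cap_of (dec i))))" using finI by (simp add: P_def)
  have inj: "inj_on f P"
  proof (rule inj_onI)
    fix u v assume u: "u \<in> P" and v: "v \<in> P" and fe: "f u = f v"
    obtain i p where up: "u = (i,p)" by (cases u)
    obtain j q where vq: "v = (j,q)" by (cases v)
    have ii: "i \<in> I" "p \<le> plen (cap_of (dec i))" using u up by (auto simp: P_def)
    have jj: "j \<in> I" "q \<le> plen (cap_of (dec j))" using v vq by (auto simp: P_def)
    have iN: "i \<in> Nset" "j \<in> Nset" using ii jj I by auto
    define cp where "cp = snd (confs (cap_of (dec i)) ! p)"
    define cq where "cq = snd (confs (cap_of (dec j)) ! q)"
    have st: "fst (confs (cap_of (dec i)) ! p) = fst (confs (cap_of (dec j)) ! q)"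
      using fe up vq by (simp add: f_def)
    have md: "int cp mod K = int cq mod K" using fe up vq by (simp add: f_def cp_def cq_def)
    have d1: "K dvd (int cq - int cp)" using md[symmetric] by (simp add: mod_eq_dvd_iff)
    have d2: "K dvd (int cp - int cq)" using md by (simp add: mod_eq_dvd_iff)
    show "u = v"
    proof (cases "i < j")
      case True
      obtain x y where "cp + x * nat (teff_list (sp (Sf i))) = cq + y * nat (- teff_list (sn (Tf j)))"
        using H[OF ii(1) jj(1) d1] by blast
      then show ?thesis using merge_false[OF iN True ii(2) jj(2) st] by (auto simp: cp_def cq_def)
    next
      case False
      show ?thesis
      proof (cases "j < i")
        case True
        obtain x y where "cq + x * nat (teff_list (sp (Sf j))) = cp + y * nat (- teff_list (sn (Tf i)))"
          using H[OF jj(1) ii(1) d2] by blast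
        then show ?thesis using merge_false[OF iN(2,1) True jj(2) ii(2) st[symmetric]] by (auto simp: cp_def cq_def)
      next
        case False2: False
        then have ij: "i = j" using False by simp
        show ?thesis
        proof (cases "p < q")
          case True
          show ?thesis using same_false[OF iN(1) True] jj(2) st H[OF ii(1) ii(1) d1] ij by (auto simp: cp_def cq_def)
        next
          case False3: False
          show ?thesis
          proof (cases "q < p")
            case True
            show ?thesis using same_false[OF iN(1) True] ii(2) st H[OF ii(1) ii(1) d2] ij by (auto simp: cp_def cq_def)
          next
            case False
            then show ?thesis using False3 ij up vq by simp
          qed
        qed
      qed
    qed
  qed
  have img: "f ` P \<subseteq> Q \<times> {0..<K}"
  proof
    fix z assume "z \<in> f ` P"
    then obtain i p where ip: "i \<in> I" "p \<le> plen (cap_of (dec i))" "z = f (i,p)" by (auto simp: P_def)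
    have "fst (confs (cap_of (dec i)) ! p) \<in> Q" using cap_states ip I by blast
    then show "z \<in> Q \<times> {0..<K}" using ip K by (simp add: f_def)
  qed
  have "card P \<le> card (Q \<times> {0..<K})" using card_inj_on_le[OF inj img] finQ by simp
  also have "\<dots> = n * nat K" by (simp add: card_cartesian_product n_def)
  finally have "card P \<le> n * nat K" .
  moreover have "(\<Sum>i\<in>I. plen (cap_of (dec i))) \<le> card P" unfolding cardP by (rule sum_mono) simp
  ultimately show ?thesis by simp
qed

lemma count_S:
  assumes S: "is_scc Q Tp S" "pos_enabled Tp S"
  shows "int (\<Sum>i\<in>{i\<in>Nset. Sf i = S}. plen (cap_of (dec i))) \<le> teff_list (sp S) * int n"
proof -
  have K: "teff_list (sp S) > 0" using sp_facts[OF S] by simp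
  have "(\<Sum>i\<in>{i\<in>Nset. Sf i = S}. plen (cap_of (dec i))) \<le> n * nat (teff_list (sp S))"
  proof (rule count_gen[OF _ K])
    fix i j cp cq assume i: "i \<in> {i\<in>Nset. Sf i = S}" and j: "j \<in> {i\<in>Nset. Sf i = S}"
      and d: "teff_list (sp S) dvd (int cq - int cp)"
    have B: "- teff_list (sn (Tf j)) > 0" using j dec_facts sn_facts by auto
    show "(\<exists>x y. cp + x * nat (teff_list (sp (Sf i))) = cq + y * nat (- teff_list (sn (Tf j))))
        \<and> gcd (teff_list (sp (Sf i))) (- teff_list (sn (Tf i))) dvd (int cq - int cp)"
      using ex_xy_A[OF K B d] i d by (auto intro: dvd_trans[OF gcd_dvd1])
  qed auto
  then have "int (\<Sum>i\<in>{i\<in>Nset. Sf i = S}. plen (cap_of (dec i))) \<le> int (n * nat (teff_list (sp S)))" by linarith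
  then show ?thesis using K by (simp add: mult.commute)
qed

lemma count_T:
  assumes T: "is_scc Q Tp T" "neg_enabled Tp T"
  shows "int (\<Sum>i\<in>{i\<in>Nset. Tf i = T}. plen (cap_of (dec i))) \<le> int n * (- teff_list (sn T))"
proof -
  have K: "- teff_list (sn T) > 0" using sn_facts[OF T] by simp
  have "(\<Sum>i\<in>{i\<in>Nset. Tf i = T}. plen (cap_of (dec i))) \<le> n * nat (- teff_list (sn T))"
  proof (rule count_gen[OF _ K])
    fix i j cp cq assume i: "i \<in> {i\<in>Nset. Tf i = T}" and j: "j \<in> {i\<in>Nset. Tf i = T}"
      and d: "(- teff_list (sn T)) dvd (int cq - int cp)"
    have A: "teff_list (sp (Sf i)) > 0" using i dec_facts sp_facts by auto
    show "(\<exists>x y. cp + x * nat (teff_list (sp (Sf i))) = cq + y * nat (- teff_list (sn (Tf j))))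
        \<and> gcd (teff_list (sp (Sf i))) (- teff_list (sn (Tf i))) dvd (int cq - int cp)"
      using ex_xy_B[OF A K d] i j d by (auto intro: dvd_trans[OF gcd_dvd2])
  qed auto
  then have "int (\<Sum>i\<in>{i\<in>Nset. Tf i = T}. plen (cap_of (dec i))) \<le> int (n * nat (- teff_list (sn T)))" by linarith
  then show ?thesis using K by simp
qed

end



context setup6 begin

lemma scc_sub: "is_scc Q Tp S \<Longrightarrow> S \<subseteq> Q" by (auto simp: is_scc_def)

lemma scc_disj: "is_scc Q Tp S \<Longrightarrow> is_scc Q Tp S' \<Longrightarrow> x \<in> S \<Longrightarrow> x \<in> S' \<Longrightarrow> S = S'"
proof -
  assume a: "is_scc Q Tp S" "is_scc Q Tp S'" "x \<in> S" "x \<in> S'"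
  obtain p where p: "S = {q \<in> Q. (p, q) \<in> (edges Tp)\<^sup>* \<and> (q, p) \<in> (edges Tp)\<^sup>*}" using a(1) by (auto simp: is_scc_def)
  obtain p' where p': "S' = {q \<in> Q. (p', q) \<in> (edges Tp)\<^sup>* \<and> (q, p') \<in> (edges Tp)\<^sup>*}" using a(2) by (auto simp: is_scc_def)
  have x: "(p, x) \<in> (edges Tp)\<^sup>*" "(x, p) \<in> (edges Tp)\<^sup>*" "(p', x) \<in> (edges Tp)\<^sup>*" "(x, p') \<in> (edges Tp)\<^sup>*"
    using a(3,4) p p' by auto
  show ?thesis unfolding p p' using x by (blast intro: rtrancl_trans)
qed

lemma teff_list_le: "set \<sigma> \<subseteq> Tp \<Longrightarrow> teff_list \<sigma> \<le> int (length \<sigma>)"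
  by (induction \<sigma>) (auto simp: teff_list_def dest: teff_le)

lemma A_le: "is_scc Q Tp S \<Longrightarrow> pos_enabled Tp S \<Longrightarrow> teff_list (sp S) \<le> int (card S)"
proof -
  assume a: "is_scc Q Tp S" "pos_enabled Tp S"
  note f = sp_facts[OF a]
  have s: "set (sp S) \<subseteq> Tp" "distinct (map tsrc (sp S))" using f by (auto simp: simple_cycle_def is_cycle_def)
  have c: "set (map tsrc (sp S)) \<subseteq> S" using f by (auto simp: contained_def)
  have finS: "finite S" using scc_sub[OF a(1)] finQ finite_subset by blast
  have "length (sp S) \<le> card S" using card_mono[OF finS c] distinct_card[OF s(2)] by simp
  then show ?thesis using teff_list_le[OF s(1)] by linarith
qed

lemma total: "(\<Sum>i\<in>Nset. plen (cap_of (dec i))) \<le> n^2"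
proof -
  define F where "F = Sf ` Nset"
  have finF: "finite F" using finNset by (simp add: F_def)
  have FS: "is_scc Q Tp S \<and> pos_enabled Tp S" if "S \<in> F" for S using dec_facts that by (auto simp: F_def)
  have eq: "(\<Sum>i\<in>Nset. plen (cap_of (dec i))) = (\<Sum>S\<in>F. \<Sum>i\<in>{i\<in>Nset. Sf i = S}. plen (cap_of (dec i)))"
    unfolding F_def by (rule sum.image_gen[OF finNset])
  have "int (\<Sum>i\<in>Nset. plen (cap_of (dec i))) = (\<Sum>S\<in>F. int (\<Sum>i\<in>{i\<in>Nset. Sf i = S}. plen (cap_of (dec i))))"
    unfolding eq by simp
  also have "\<dots> \<le> (\<Sum>S\<in>F. int (card S) * int n)"
  proof (rule sum_mono)
    fix S assume S: "S \<in> F"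
    have "int (\<Sum>i\<in>{i\<in>Nset. Sf i = S}. plen (cap_of (dec i))) \<le> teff_list (sp S) * int n"
      using count_S FS[OF S] by blast
    also have "\<dots> \<le> int (card S) * int n" using A_le FS[OF S] by (simp add: mult_right_mono)
    finally show "int (\<Sum>i\<in>{i\<in>Nset. Sf i = S}. plen (cap_of (dec i))) \<le> int (card S) * int n" .
  qed
  also have "\<dots> = int (\<Sum>S\<in>F. card S) * int n" by (simp add: sum_distrib_right)
  also have "\<dots> \<le> int n * int n"
  proof -
    have pw: "pairwise disjnt F"
      unfolding pairwise_def disjnt_def using FS scc_disj by blast
    have fin: "\<And>A. A \<in> F \<Longrightarrow> finite A" using FS scc_sub finQ finite_subset by blast
    have "(\<Sum>S\<in>F. card S) = card (\<Union>F)" using card_Union_disjoint[OF pw fin] by simp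
    also have "\<dots> \<le> card Q" using FS scc_sub finQ by (intro card_mono) auto
    finally have "int (\<Sum>S\<in>F. card S) \<le> int n" using n_def by (simp only: of_nat_le_iff)
    then show ?thesis by (rule mult_right_mono) simp
  qed
  finally have h: "int (\<Sum>i\<in>Nset. plen (cap_of (dec i))) \<le> int n * int n" .
  then have "(\<Sum>i\<in>Nset. plen (cap_of (dec i))) \<le> n * n" by (metis of_nat_le_iff of_nat_mult)
  then show ?thesis by (simp add: power2_eq_square)
qed

lemma main:
  shows "(\<forall>S. is_scc Q Tp S \<and> pos_enabled Tp S \<longrightarrow>
            int (\<Sum>i\<in>{i\<in>Nset. Sf i = S}. plen (cap_of (dec i))) \<le> teff_list (sp S) * int n)
       \<and> (\<forall>T. is_scc Q Tp T \<and> neg_enabled Tp T \<longrightarrow>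
            int (\<Sum>i\<in>{i\<in>Nset. Tf i = T}. plen (cap_of (dec i))) \<le> int n * (- teff_list (sn T)))
       \<and> (\<Sum>i\<in>Nset. plen (cap_of (dec i))) \<le> n ^ 2"
proof (intro conjI allI impI)
  fix S assume "is_scc Q Tp S \<and> pos_enabled Tp S"
  then show "int (\<Sum>i\<in>{i\<in>Nset. Sf i = S}. plen (cap_of (dec i))) \<le> teff_list (sp S) * int n"
    using count_S by blast
next
  fix T assume "is_scc Q Tp T \<and> neg_enabled Tp T"
  then show "int (\<Sum>i\<in>{i\<in>Nset. Tf i = T}. plen (cap_of (dec i))) \<le> int n * (- teff_list (sn T))"
    using count_T by blast
next
  show "(\<Sum>i\<in>Nset. plen (cap_of (dec i))) \<le> n ^ 2" by (rule total)
qed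

end

theorem lemma6:
  fixes Q :: "'q set" and Tp Tz :: "'q trans set"
    and sp sn :: "'q set \<Rightarrow> 'q trans list"
    and n :: nat and \<alpha> \<beta> :: "'q conf" and \<rho> :: "'q path" and rs :: "'q path list"
    and Nset :: "nat set" and Sf Tf :: "nat \<Rightarrow> 'q set" and dec :: "nat \<Rightarrow> 'q ndec"
  assumes ocs: "ocs Q Tp Tz" and n_def: "n = card Q"
    and sig: "sigma_ok Q Tp sp sn"
    and alpha: "fst \<alpha> \<in> Q" "snd \<alpha> = 0" and beta: "fst \<beta> \<in> Q" "snd \<beta> = 0"
    and rho: "is_path Tp Tz \<rho>" "psrc \<rho> = \<alpha>" "ptgt \<rho> = \<beta>"
    and rho_min: "\<And>\<rho>'. is_path Tp Tz \<rho>' \<Longrightarrow> psrc \<rho>' = \<alpha> \<Longrightarrow> ptgt \<rho>' = \<beta> \<Longrightarrow> zeros \<rho> \<le> zeros \<rho>'"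
    and dec_rho: "decomp \<rho> rs"
    and arcs: "\<And>i. i < length rs \<Longrightarrow> is_arc Tp Tz (rs ! i)"
    and Nset: "Nset \<subseteq> {..<length rs}"
    and low: "\<And>i. i < length rs \<Longrightarrow> i \<notin> Nset \<Longrightarrow>
         is_low n (rs ! i) \<and>
         (\<forall>\<rho>'. is_arc Tp Tz \<rho>' \<and> is_low n \<rho>' \<and> psrc \<rho>' = psrc (rs ! i) \<and> ptgt \<rho>' = ptgt (rs ! i)
               \<longrightarrow> plen (rs ! i) \<le> plen \<rho>')"
    and normal: "\<And>i. i \<in> Nset \<Longrightarrow> good_dec Q Tp Tz sp sn (rs ! i) (Sf i) (Tf i) (dec i)"
  shows "(\<forall>S. is_scc Q Tp S \<and> pos_enabled Tp S \<longrightarrow>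
            int (\<Sum>i\<in>{i\<in>Nset. Sf i = S}. plen (cap_of (dec i))) \<le> teff_list (sp S) * int n)
       \<and> (\<forall>T. is_scc Q Tp T \<and> neg_enabled Tp T \<longrightarrow>
            int (\<Sum>i\<in>{i\<in>Nset. Tf i = T}. plen (cap_of (dec i))) \<le> int n * (- teff_list (sn T)))
       \<and> (\<Sum>i\<in>Nset. plen (cap_of (dec i))) \<le> n ^ 2"
  proof -
  interpret setup6 Q Tp Tz sp sn n \<alpha> \<beta> \<rho> rs Nset Sf Tf dec
    by (rule setup6.intro[OF ocs n_def sig alpha(2) rho rho_min dec_rho arcs Nset normal])
  show ?thesis by (rule main)
qed

end
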